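(* Let $X$, $Y$ be $d$-dimensional normal pseudomanifolds such that $Y$ is obtained from $X$ by starring a new vertex in a facet of $X$. Then $Y$ is a stacked $d$-sphere if and only if $X$ is a stacked $d$-sphere.
   Context: A simplicial complex is a finite set of finite sets closed under taking subsets; an element of size $i+1$ is an $i$-face (the empty set is the unique $(-1)$-face). A pure $d$-dimensional complex has all maximal faces (facets) of dimension $d$. The link of a face $\alpha$ is $\mathrm{lk}_X(\alpha)=\{\beta\in X:\beta\cap\alpha=\emptyset,\ \alpha\cup\beta\in X\}$. A $d$-dimensional normal pseudomanifold ($d\ge1$) is a pure $d$-dimensional simplicial complex in which every $(d-1)$-face lies in exactly two facets and the link of every face of dimension $\le d-2$ (including the empty face) is connected. If $\sigma$ is a facet of a pure $d$-dimensional complex $X$ and $v\notin V(X)$, starring $v$ in $\sigma$ gives the complex whose facets are the facets of $X$ other than $\sigma$ together with the sets $\tau\cup\{v\}$ for the $(d-1)$-faces $\tau\subset\sigma$. The standard $d$-sphere $S^d_{d+2}$ is the complex of all proper subsets of a $(d+2)$-set; a stacked $d$-sphere is a complex obtained from $S^d_{d+2}$ by finitely many starrings. *)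

theory Defs
  imports Main
begin

definition simplicial_complex :: "'a set set \<Rightarrow> bool" where
  "simplicial_complex X \<longleftrightarrow> finite X \<and> (\<forall>F\<in>X. finite F) \<and> (\<forall>F\<in>X. \<forall>G. G \<subseteq> F \<longrightarrow> G \<in> X)"

definition vertices :: "'a set set \<Rightarrow> 'a set" where
  "vertices X = \<Union>X"

definition facets :: "'a set set \<Rightarrow> 'a set set" where
  "facets X = {F \<in> X. \<forall>G\<in>X. F \<subseteq> G \<longrightarrow> G = F}"

definition pure_dim :: "nat \<Rightarrow> 'a set set \<Rightarrow> bool" where
  "pure_dim d X \<longleftrightarrow> simplicial_complex X \<and> (\<exists>F\<in>X. card F = d + 1)
     \<and> (\<forall>F\<in>facets X. card F = d + 1)"

definition link :: "'a set set \<Rightarrow> 'a set \<Rightarrow> 'a set set" where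
  "link X \<alpha> = {\<beta> \<in> X. \<beta> \<inter> \<alpha> = {} \<and> \<alpha> \<union> \<beta> \<in> X}"

definition edge_rel :: "'a set set \<Rightarrow> ('a \<times> 'a) set" where
  "edge_rel X = {(x, y). {x, y} \<in> X}"

definition connected_complex :: "'a set set \<Rightarrow> bool" where
  "connected_complex X \<longleftrightarrow> (\<forall>x\<in>vertices X. \<forall>y\<in>vertices X. (x, y) \<in> (edge_rel X)\<^sup>*)"

definition normal_pseudomanifold :: "nat \<Rightarrow> 'a set set \<Rightarrow> bool" where
  "normal_pseudomanifold d X \<longleftrightarrow> d \<ge> 1 \<and> pure_dim d X
     \<and> (\<forall>\<tau>\<in>X. card \<tau> = d \<longrightarrow> card {F \<in> facets X. \<tau> \<subseteq> F} = 2)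
     \<and> (\<forall>\<alpha>\<in>X. card \<alpha> \<le> d - 1 \<longrightarrow> connected_complex (link X \<alpha>))"

definition star_in :: "nat \<Rightarrow> 'a set set \<Rightarrow> 'a set \<Rightarrow> 'a \<Rightarrow> 'a set set" where
  "star_in d X \<sigma> v =
     {\<alpha>. \<exists>F \<in> (facets X - {\<sigma>}) \<union> {insert v \<tau> | \<tau>. \<tau> \<subseteq> \<sigma> \<and> card \<tau> = d}. \<alpha> \<subseteq> F}"

definition standard_sphere :: "nat \<Rightarrow> 'a set \<Rightarrow> 'a set set" where
  "standard_sphere d V = {A. A \<subset> V}"

inductive stacked_sphere :: "nat \<Rightarrow> 'a set set \<Rightarrow> bool" for d where
  base: "finite V \<Longrightarrow> card V = d + 2 \<Longrightarrow> stacked_sphere d (standard_sphere d V)"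
| step: "stacked_sphere d X \<Longrightarrow> \<sigma> \<in> facets X \<Longrightarrow> v \<notin> vertices X
          \<Longrightarrow> stacked_sphere d (star_in d X \<sigma> v)"

end

theory Submission imports Defs begin

definition Ist :: "'a \<Rightarrow> 'a set \<Rightarrow> 'a set set" where
  "Ist v \<sigma> = {insert v \<beta> | \<beta>. \<beta> \<subset> \<sigma>}"

definition starS :: "'a set set \<Rightarrow> 'a set \<Rightarrow> 'a \<Rightarrow> 'a set set" where
  "starS X \<sigma> v = (X - {\<sigma>}) \<union> Ist v \<sigma>"

definition pc :: "nat \<Rightarrow> 'a set set \<Rightarrow> bool" where
  "pc d X \<longleftrightarrow> simplicial_complex X \<and> (\<forall>F\<in>X. card F \<le> d+1) \<and> (\<forall>F\<in>X. \<exists>G\<in>X. F \<subseteq> G \<and> card G = d+1)"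

lemma Ist_iff: "v \<notin> \<sigma> \<Longrightarrow> \<alpha> \<in> Ist v \<sigma> \<longleftrightarrow> (v \<in> \<alpha> \<and> \<alpha> - {v} \<subset> \<sigma>)"
  unfolding Ist_def
  apply (rule iffI)
   apply (auto)[1]
  apply (rule CollectI, rule exI[of _ "\<alpha> - {v}"]) by auto

lemma face_in_facet:
  assumes "simplicial_complex X" "\<alpha> \<in> X" shows "\<exists>F\<in>facets X. \<alpha> \<subseteq> F"
proof -
  have "finite X" using assms(1) unfolding simplicial_complex_def by blast
  from finite_has_maximal2[OF this assms(2)] obtain m where m: "m \<in> X" "\<alpha> \<subseteq> m" "\<forall>b\<in>X. m \<subseteq> b \<longrightarrow> m = b" by auto
  then have "m \<in> facets X" unfolding facets_def by blast
  then show ?thesis using m(2) by blast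
qed

lemma sc_closed: "simplicial_complex X \<Longrightarrow> F \<in> X \<Longrightarrow> G \<subseteq> F \<Longrightarrow> G \<in> X"
  unfolding simplicial_complex_def by blast

lemma sc_finite: "simplicial_complex X \<Longrightarrow> F \<in> X \<Longrightarrow> finite F"
  unfolding simplicial_complex_def by blast

lemma char:
  assumes sc: "simplicial_complex X" and sf: "\<sigma> \<in> facets X" and cs: "card \<sigma> = Suc d"
    and vv: "v \<notin> vertices X"
  shows "star_in d X \<sigma> v = starS X \<sigma> v"
proof -
  have sX: "\<sigma> \<in> X" using sf unfolding facets_def by auto
  have fs: "finite \<sigma>" using sc_finite[OF sc sX] .
  have vs: "v \<notin> \<sigma>" using vv sX unfolding vertices_def by auto
  have vX: "\<And>\<alpha>. \<alpha> \<in> X \<Longrightarrow> v \<notin> \<alpha>" using vv unfolding vertices_def by auto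
  have max: "\<And>F. F \<in> X \<Longrightarrow> \<sigma> \<subseteq> F \<Longrightarrow> F = \<sigma>" using sf unfolding facets_def by auto
  have ext: "\<exists>\<tau>. \<beta> \<subseteq> \<tau> \<and> \<tau> \<subseteq> \<sigma> \<and> card \<tau> = d" if "\<beta> \<subset> \<sigma>" for \<beta>
  proof -
    have "card \<beta> < card \<sigma>" using psubset_card_mono[OF fs that] .
    then show ?thesis using exists_subset_between[of \<beta> d \<sigma>] that fs cs by auto
  qed
  show ?thesis
  proof (rule set_eqI, rule iffI)
    fix \<alpha> assume "\<alpha> \<in> star_in d X \<sigma> v"
    then obtain F where F: "F \<in> (facets X - {\<sigma>}) \<union> {insert v \<tau> | \<tau>. \<tau> \<subseteq> \<sigma> \<and> card \<tau> = d}" "\<alpha> \<subseteq> F"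
      unfolding star_in_def by auto
    show "\<alpha> \<in> starS X \<sigma> v"
    proof (cases "F \<in> facets X - {\<sigma>}")
      case True
      then have "F \<in> X" "F \<noteq> \<sigma>" unfolding facets_def by auto
      then have "\<alpha> \<in> X" "\<alpha> \<noteq> \<sigma>" using sc_closed[OF sc] F(2) max by auto
      then show ?thesis unfolding starS_def by auto
    next
      case False
      then obtain \<tau> where t: "F = insert v \<tau>" "\<tau> \<subseteq> \<sigma>" "card \<tau> = d" using F(1) by auto
      have tp: "\<tau> \<subset> \<sigma>" using t cs by auto
      show ?thesis
      proof (cases "v \<in> \<alpha>")
        case True
        then have "\<alpha> - {v} \<subset> \<sigma>" using t tp F(2) by auto
        then show ?thesis unfolding starS_def using Ist_iff[OF vs] True by auto
      next
        case False
        then have "\<alpha> \<subset> \<sigma>" using t tp F(2) by auto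
        then show ?thesis unfolding starS_def using sc_closed[OF sc sX] by auto
      qed
    qed
  next
    fix \<alpha> assume "\<alpha> \<in> starS X \<sigma> v"
    then consider "\<alpha> \<in> X" "\<alpha> \<noteq> \<sigma>" | "v \<in> \<alpha>" "\<alpha> - {v} \<subset> \<sigma>"
      unfolding starS_def using Ist_iff[OF vs] by auto
    then show "\<alpha> \<in> star_in d X \<sigma> v"
    proof cases
      case 1
      obtain F where F: "F \<in> facets X" "\<alpha> \<subseteq> F" using face_in_facet[OF sc 1(1)] by auto
      show ?thesis
      proof (cases "F = \<sigma>")
        case False
        then show ?thesis unfolding star_in_def using F by auto
      next
        case True
        then have "\<alpha> \<subset> \<sigma>" using F 1 by auto
        then obtain \<tau> where t: "\<alpha> \<subseteq> \<tau>" "\<tau> \<subseteq> \<sigma>" "card \<tau> = d" using ext by blast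
        then have "insert v \<tau> \<in> (facets X - {\<sigma>}) \<union> {insert v \<tau> | \<tau>. \<tau> \<subseteq> \<sigma> \<and> card \<tau> = d}" by blast
        then show ?thesis unfolding star_in_def using t(1) by (intro CollectI bexI[of _ "insert v \<tau>"]) auto
      qed
    next
      case 2
      then obtain \<tau> where t: "\<alpha> - {v} \<subseteq> \<tau>" "\<tau> \<subseteq> \<sigma>" "card \<tau> = d" using ext by blast
      then have a: "\<alpha> \<subseteq> insert v \<tau>" by auto
      have "insert v \<tau> \<in> (facets X - {\<sigma>}) \<union> {insert v \<tau> | \<tau>. \<tau> \<subseteq> \<sigma> \<and> card \<tau> = d}" using t by blast
      then show ?thesis unfolding star_in_def using a by (intro CollectI bexI[of _ "insert v \<tau>"]) auto
    qed
  qed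
qed

lemma pc_facets:
  assumes "pc d X" shows "facets X = {F\<in>X. card F = d+1}"
proof (rule set_eqI, rule iffI)
  fix F assume F: "F \<in> facets X"
  then have FX: "F \<in> X" and mx: "\<And>G. G \<in> X \<Longrightarrow> F \<subseteq> G \<Longrightarrow> G = F" unfolding facets_def by auto
  obtain G where G: "G \<in> X" "F \<subseteq> G" "card G = d+1" using assms FX unfolding pc_def by blast
  then show "F \<in> {F\<in>X. card F = d+1}" using mx FX by auto
next
  fix F assume F: "F \<in> {F\<in>X. card F = d+1}"
  have sc: "simplicial_complex X" using assms unfolding pc_def by blast
  have "G = F" if "G \<in> X" "F \<subseteq> G" for G
  proof -
    have "finite G" using sc_finite[OF sc that(1)] .
    moreover have "card G \<le> card F" using assms that F unfolding pc_def by auto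
    ultimately show ?thesis using card_seteq that(2) by blast
  qed
  then show "F \<in> facets X" using F unfolding facets_def by auto
qed

lemma starS_pc:
  assumes pc: "pc d Z" and tZ: "\<tau> \<in> Z" and ct: "card \<tau> = d+1" and uZ: "u \<notin> \<Union>Z"
  shows "pc d (starS Z \<tau> u)"
proof -
  have sc: "simplicial_complex Z" using pc unfolding pc_def by blast
  have ft: "finite \<tau>" using sc_finite[OF sc tZ] .
  have ut: "u \<notin> \<tau>" using uZ tZ by auto
  have uZ': "\<And>\<alpha>. \<alpha> \<in> Z \<Longrightarrow> u \<notin> \<alpha>" using uZ by auto
  have cardle: "\<And>F. F \<in> Z \<Longrightarrow> card F \<le> d+1" using pc unfolding pc_def by blast
  have ext: "\<exists>\<tau>'. \<beta> \<subseteq> \<tau>' \<and> \<tau>' \<subseteq> \<tau> \<and> card \<tau>' = d" if "\<beta> \<subset> \<tau>" for \<beta>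
  proof -
    have "card \<beta> < card \<tau>" using psubset_card_mono[OF ft that] .
    then show ?thesis using exists_subset_between[of \<beta> d \<tau>] that ft ct by auto
  qed
  have fin: "finite (starS Z \<tau> u)"
  proof -
    have "Ist u \<tau> \<subseteq> insert u ` Pow \<tau>" unfolding Ist_def by auto
    then have "finite (Ist u \<tau>)" using ft finite_subset by blast
    moreover have "finite Z" using sc unfolding simplicial_complex_def by blast
    ultimately show ?thesis unfolding starS_def by blast
  qed
  have mem: "\<alpha> \<in> starS Z \<tau> u \<longleftrightarrow> (\<alpha> \<in> Z \<and> \<alpha> \<noteq> \<tau>) \<or> (u \<in> \<alpha> \<and> \<alpha> - {u} \<subset> \<tau>)" for \<alpha>
    unfolding starS_def using Ist_iff[OF ut] by auto
  have ffin: "finite F" if "F \<in> starS Z \<tau> u" for F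
  proof (cases "F \<in> Z")
    case True then show ?thesis using sc_finite[OF sc] by blast
  next
    case False
    then have "F - {u} \<subseteq> \<tau>" using that mem by blast
    then have "finite (F - {u})" using ft finite_subset by blast
    then show ?thesis by simp
  qed
  have clo: "G \<in> starS Z \<tau> u" if "F \<in> starS Z \<tau> u" "G \<subseteq> F" for F G
  proof (cases "F \<in> Z \<and> F \<noteq> \<tau>")
    case True
    then have "G \<in> Z" using sc_closed[OF sc] that by auto
    moreover have "G \<noteq> \<tau>"
    proof
      assume "G = \<tau>"
      then have "\<tau> \<subseteq> F" using that by auto
      moreover have "finite F" using sc_finite[OF sc] True by auto
      moreover have "card F \<le> card \<tau>" using cardle True ct by simp
      ultimately have "\<tau> = F" using card_seteq by blast
      then have "F = \<tau>" by simp
      then show False using True by auto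
    qed
    ultimately show ?thesis using mem by auto
  next
    case False
    then have F: "u \<in> F" "F - {u} \<subset> \<tau>" using that mem by auto
    show ?thesis
    proof (cases "u \<in> G")
      case True
      then show ?thesis using F that mem by auto
    next
      case False
      then have "G \<subset> \<tau>" using F that by auto
      then show ?thesis using mem sc_closed[OF sc tZ] by auto
    qed
  qed
  have cle: "card F \<le> d+1" if "F \<in> starS Z \<tau> u" for F
  proof (cases "F \<in> Z")
    case True then show ?thesis using cardle by auto
  next
    case False
    then have F: "u \<in> F" "F - {u} \<subset> \<tau>" using that mem by auto
    have "card (F - {u}) < card \<tau>" using psubset_card_mono[OF ft F(2)] .
    then have "card (F - {u}) \<le> d" using ct by auto
    moreover have "finite (F - {u})" using F(2) ft by (meson finite_subset psubset_imp_subset)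
    then have "finite F" by simp
    then have "card F = Suc (card (F - {u}))" using F(1) by (rule card.remove)
    ultimately show ?thesis by simp
  qed
  have pure: "\<exists>G\<in>starS Z \<tau> u. F \<subseteq> G \<and> card G = d+1" if "F \<in> starS Z \<tau> u" for F
  proof -
    have big: "\<exists>G\<in>starS Z \<tau> u. insert u \<beta> \<subseteq> G \<and> card G = d+1" if b: "\<beta> \<subset> \<tau>" for \<beta>
    proof -
      obtain \<tau>' where t: "\<beta> \<subseteq> \<tau>'" "\<tau>' \<subseteq> \<tau>" "card \<tau>' = d" using ext[OF b] by blast
      have "\<tau>' \<subset> \<tau>" using t ct by auto
      moreover have "u \<notin> \<tau>'" using t ut by auto
      moreover have "finite \<tau>'" using t(2) ft finite_subset by auto
      ultimately have "insert u \<tau>' \<in> starS Z \<tau> u" "card (insert u \<tau>') = d+1"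
        using mem t by auto
      then show ?thesis using t by blast
    qed
    show ?thesis
    proof (cases "F \<in> Z \<and> F \<noteq> \<tau>")
      case True
      then obtain G where G: "G \<in> Z" "F \<subseteq> G" "card G = d+1" using pc unfolding pc_def by blast
      show ?thesis
      proof (cases "G = \<tau>")
        case False
        then have "G \<in> starS Z \<tau> u" using G(1) mem by blast
        then show ?thesis using G by blast
      next
        case True
        then have "F \<subset> \<tau>" using G \<open>F \<in> Z \<and> F \<noteq> \<tau>\<close> by auto
        then obtain G' where "G' \<in> starS Z \<tau> u" "insert u F \<subseteq> G'" "card G' = d+1" using big by blast
        then show ?thesis by blast
      qed
    next
      case False
      then have F: "u \<in> F" "F - {u} \<subset> \<tau>" using that mem by auto
      obtain G' where "G' \<in> starS Z \<tau> u" "insert u (F - {u}) \<subseteq> G'" "card G' = d+1" using big[OF F(2)] by blast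
      moreover have "F \<subseteq> insert u (F - {u})" by blast
      ultimately show ?thesis by blast
    qed
  qed
  show ?thesis unfolding pc_def simplicial_complex_def using fin ffin clo cle pure by blast
qed


lemma sphere_pc:
  assumes fV: "finite V" and cV: "card V = d + 2" shows "pc d (standard_sphere d V)"
proof -
  have sub: "standard_sphere d V \<subseteq> Pow V" unfolding standard_sphere_def by blast
  then have fin: "finite (standard_sphere d V)" using fV finite_subset by blast
  have a: "\<forall>F\<in>standard_sphere d V. finite F" using sub fV finite_subset by blast
  have b: "\<forall>F\<in>standard_sphere d V. \<forall>G. G \<subseteq> F \<longrightarrow> G \<in> standard_sphere d V"
    unfolding standard_sphere_def by blast
  have c: "card F \<le> d+1" if "F \<in> standard_sphere d V" for F
  proof -
    have "F \<subset> V" using that unfolding standard_sphere_def by blast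
    then have "card F < card V" using psubset_card_mono[OF fV] by blast
    then show ?thesis using cV by simp
  qed
  have e: "\<exists>G\<in>standard_sphere d V. F \<subseteq> G \<and> card G = d+1" if FF: "F \<in> standard_sphere d V" for F
  proof -
    have FV: "F \<subset> V" using FF unfolding standard_sphere_def by blast
    then obtain x where x: "x \<in> V" "x \<notin> F" by blast
    have "card (V - {x}) = card V - 1" using card_Diff_singleton[OF x(1)] .
    then have "card (V - {x}) = d+1" using cV by simp
    moreover have "F \<subseteq> V - {x}" using FV x by blast
    moreover have "V - {x} \<in> standard_sphere d V" using x unfolding standard_sphere_def by blast
    ultimately show ?thesis by blast
  qed
  have "simplicial_complex (standard_sphere d V)" unfolding simplicial_complex_def using fin a b by (intro conjI)
  then show ?thesis unfolding pc_def using c e by (intro conjI ballI) auto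
qed

lemma stacked_pc: "stacked_sphere d Z \<Longrightarrow> pc d Z"
proof (induction rule: stacked_sphere.induct)
  case (base V) then show ?case using sphere_pc by blast
next
  case (step X \<sigma> v)
  have pcX: "pc d X" using step.IH .
  have c: "card \<sigma> = d+1" "\<sigma> \<in> X" using \<open>\<sigma> \<in> facets X\<close> pc_facets[OF pcX] by auto
  have scX: "simplicial_complex X" using pcX unfolding pc_def by blast
  have e: "star_in d X \<sigma> v = starS X \<sigma> v" using char[OF scX \<open>\<sigma> \<in> facets X\<close>] c(1) \<open>v \<notin> vertices X\<close> by simp
  have "v \<notin> \<Union>X" using \<open>v \<notin> vertices X\<close> unfolding vertices_def .
  then show ?case unfolding e using starS_pc[OF pcX c(2) c(1)] by blast
qed

lemma stacked_induct[consumes 1, case_names base step]: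
  assumes "stacked_sphere d Z"
    and "\<And>V. finite V \<Longrightarrow> card V = d + 2 \<Longrightarrow> P (standard_sphere d V)"
    and "\<And>X \<sigma> v. stacked_sphere d X \<Longrightarrow> pc d X \<Longrightarrow> P X \<Longrightarrow> \<sigma> \<in> X \<Longrightarrow> card \<sigma> = d+1
          \<Longrightarrow> v \<notin> \<Union>X \<Longrightarrow> P (starS X \<sigma> v)"
  shows "P Z"
  using assms(1)
proof (induction rule: stacked_sphere.induct)
  case (base V) then show ?case using assms(2) by blast
next
  case (step X \<sigma> v)
  have pcX: "pc d X" using stacked_pc \<open>stacked_sphere d X\<close> by blast
  have c: "card \<sigma> = d+1" "\<sigma> \<in> X" using \<open>\<sigma> \<in> facets X\<close> pc_facets[OF pcX] by auto
  have scX: "simplicial_complex X" using pcX unfolding pc_def by blast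
  have e: "star_in d X \<sigma> v = starS X \<sigma> v" using char[OF scX \<open>\<sigma> \<in> facets X\<close>] c(1) \<open>v \<notin> vertices X\<close> by simp
  have "v \<notin> \<Union>X" using \<open>v \<notin> vertices X\<close> unfolding vertices_def .
  then show ?case unfolding e using assms(3)[OF \<open>stacked_sphere d X\<close> pcX step.IH c(2) c(1)] by blast
qed

lemma memS:
  assumes "v \<notin> \<sigma>" shows "\<alpha> \<in> starS X \<sigma> v \<longleftrightarrow> (\<alpha> \<in> X \<and> \<alpha> \<noteq> \<sigma>) \<or> (v \<in> \<alpha> \<and> \<alpha> - {v} \<subset> \<sigma>)"
proof -
  have "\<alpha> \<in> starS X \<sigma> v \<longleftrightarrow> (\<alpha> \<in> X \<and> \<alpha> \<noteq> \<sigma>) \<or> \<alpha> \<in> Ist v \<sigma>" unfolding starS_def by blast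
  then show ?thesis unfolding Ist_iff[OF assms] .
qed

lemma sphere_sub:
  assumes "stacked_sphere d Z" "d \<ge> 1" "finite W" "card W = d+2" "\<And>A. A \<subset> W \<Longrightarrow> A \<in> Z"
  shows "Z = standard_sphere d W"
  using assms
proof (induction rule: stacked_induct)
  case (base V)
  have cW: "card W = d+2" and fW: "finite W" and sW: "\<And>A. A \<subset> W \<Longrightarrow> A \<in> standard_sphere d V" using base by blast+
  have "W \<subseteq> V"
  proof
    fix x assume x: "x \<in> W"
    have "W \<noteq> {x}" using cW by auto
    then have "{x} \<subset> W" using x by blast
    then show "x \<in> V" using sW unfolding standard_sphere_def by blast
  qed
  moreover have "card V \<le> card W" using cW base(2) by simp
  ultimately have "W = V" using card_seteq[OF base(1)] by blast
  then show ?case by simp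
next
  case (step X \<tau> u)
  have ut: "u \<notin> \<tau>" using \<open>u \<notin> \<Union>X\<close> \<open>\<tau> \<in> X\<close> by blast
  have mem: "\<alpha> \<in> starS X \<tau> u \<longleftrightarrow> (\<alpha> \<in> X \<and> \<alpha> \<noteq> \<tau>) \<or> (u \<in> \<alpha> \<and> \<alpha> - {u} \<subset> \<tau>)" for \<alpha>
    using memS[OF ut] .
  have uX: "\<And>\<alpha>. \<alpha> \<in> X \<Longrightarrow> u \<notin> \<alpha>" using \<open>u \<notin> \<Union>X\<close> by blast
  have sc: "simplicial_complex X" using \<open>pc d X\<close> unfolding pc_def by blast
  have ft: "finite \<tau>" using sc_finite[OF sc \<open>\<tau> \<in> X\<close>] .
  have tZ: "\<tau> \<notin> starS X \<tau> u" using mem ut by auto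
  show ?case
  proof (cases "u \<in> W")
    case False
    have AX: "\<And>A. A \<subset> W \<Longrightarrow> A \<in> X" using step.prems(4) mem False by blast
    have "X = standard_sphere d W" by (rule step.IH[OF step.prems(1,2,3) AX])
    then have "\<tau> \<subset> W" using \<open>\<tau> \<in> X\<close> unfolding standard_sphere_def by auto
    then show ?thesis using step.prems(4) tZ by blast
  next
    case True
    have W3: "card W \<ge> 3" using step.prems(1,3) by simp
    have Wu: "W - {u} \<subset> W" using True by blast
    have "W - {u} \<in> starS X \<tau> u" using step.prems(4)[OF Wu] .
    then have WuX: "W - {u} \<noteq> \<tau>" using mem[of "W - {u}"] by blast
    have sub: "W - {u} \<subseteq> \<tau>"
    proof
      fix y assume y: "y \<in> W - {u}"
      have "card {u, y} \<le> 2" by (cases "u = y") simp_all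
      moreover have "W \<subseteq> {u, y} \<Longrightarrow> card W \<le> card {u, y}" using card_mono[of "{u,y}" W] by simp
      ultimately have "\<not> W \<subseteq> {u, y}" using W3 by linarith
      then obtain x where x: "x \<in> W" "x \<noteq> u" "x \<noteq> y" by blast
      have Wx: "W - {x} \<subset> W" using x by blast
      have inS: "W - {x} \<in> starS X \<tau> u" using step.prems(4)[OF Wx] .
      have "u \<in> W - {x}" using True x by blast
      then have "W - {x} \<notin> X" using uX by blast
      then have "W - {x} - {u} \<subset> \<tau>" using mem[of "W - {x}"] inS by blast
      then show "y \<in> \<tau>" using y x by blast
    qed
    have "card (W - {u}) = card W - 1" using card_Diff_singleton[OF True] .
    then have "card \<tau> \<le> card (W - {u})" using step.prems(3) \<open>card \<tau> = d+1\<close> by simp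
    then have "W - {u} = \<tau>" using card_seteq[OF ft sub] by blast
    then show ?thesis using WuX by blast
  qed
qed

lemma Xp_sc:
  assumes pcY: "pc d Y" and fr: "finite \<rho>" and cr: "card \<rho> = d+1"
  shows "simplicial_complex ({\<alpha>\<in>Y. w \<notin> \<alpha>} \<union> Pow \<rho>) \<and> (\<forall>\<alpha>\<in>{\<alpha>\<in>Y. w \<notin> \<alpha>} \<union> Pow \<rho>. card \<alpha> \<le> d+1)"
proof -
  have sc: "simplicial_complex Y" using pcY unfolding pc_def by blast
  have cb: "\<And>F. F \<in> Y \<Longrightarrow> card F \<le> d+1" using pcY unfolding pc_def by blast
  have fY: "finite Y" using sc unfolding simplicial_complex_def by blast
  have f1: "finite ({\<alpha>\<in>Y. w \<notin> \<alpha>} \<union> Pow \<rho>)" using fY fr by simp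
  have f2: "\<forall>F\<in>{\<alpha>\<in>Y. w \<notin> \<alpha>} \<union> Pow \<rho>. finite F"
  proof
    fix F assume "F \<in> {\<alpha>\<in>Y. w \<notin> \<alpha>} \<union> Pow \<rho>"
    then show "finite F"
    proof
      assume "F \<in> {\<alpha>\<in>Y. w \<notin> \<alpha>}" then show ?thesis using sc_finite[OF sc] by blast
    next
      assume "F \<in> Pow \<rho>" then show ?thesis using fr finite_subset by blast
    qed
  qed
  have f3: "\<forall>F\<in>{\<alpha>\<in>Y. w \<notin> \<alpha>} \<union> Pow \<rho>. \<forall>G. G \<subseteq> F \<longrightarrow> G \<in> {\<alpha>\<in>Y. w \<notin> \<alpha>} \<union> Pow \<rho>"
    using sc_closed[OF sc] by blast
  have f4: "\<forall>\<alpha>\<in>{\<alpha>\<in>Y. w \<notin> \<alpha>} \<union> Pow \<rho>. card \<alpha> \<le> d+1"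
  proof
    fix F assume "F \<in> {\<alpha>\<in>Y. w \<notin> \<alpha>} \<union> Pow \<rho>"
    then show "card F \<le> d+1"
    proof
      assume "F \<in> {\<alpha>\<in>Y. w \<notin> \<alpha>}" then show ?thesis using cb by blast
    next
      assume "F \<in> Pow \<rho>" then show ?thesis using card_mono[OF fr] cr by simp
    qed
  qed
  have "simplicial_complex ({\<alpha>\<in>Y. w \<notin> \<alpha>} \<union> Pow \<rho>)" unfolding simplicial_complex_def using f1 f2 f3 by (intro conjI)
  then show ?thesis using f4 by (intro conjI)
qed

lemma assemble2:
  assumes st: "stacked_sphere d X'"
    and sc: "simplicial_complex X'" and cb: "\<forall>\<alpha>\<in>X'. card \<alpha> \<le> d+1"
    and r2: "\<rho>2 \<in> X'" "card \<rho>2 = d+1" "u \<notin> \<Union>X'" "X0 = starS X' \<rho>2 u"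
  shows "stacked_sphere d X0"
proof -
  have "G = \<rho>2" if "G \<in> X'" "\<rho>2 \<subseteq> G" for G
  proof -
    have "finite G" using sc_finite[OF sc that(1)] .
    moreover have "card G \<le> card \<rho>2" using cb that(1) r2(2) by simp
    ultimately show ?thesis using card_seteq that(2) by blast
  qed
  then have f: "\<rho>2 \<in> facets X'" unfolding facets_def using r2(1) by blast
  have uv: "u \<notin> vertices X'" unfolding vertices_def using r2(3) .
  have "star_in d X' \<rho>2 u = starS X' \<rho>2 u" using char[OF sc f _ uv] r2(2) by simp
  then show ?thesis using stacked_sphere.step[OF st f uv] r2(4) by simp
qed

lemma main:
  assumes "stacked_sphere d Y" "d \<ge> 1" "simplicial_complex X0" "s \<in> X0" "card s = d+1"
    "w \<notin> \<Union>X0" "Y = starS X0 s w"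
  shows "stacked_sphere d X0"
  using assms
proof (induction arbitrary: X0 s w rule: stacked_induct)
  case (base V)
  have ws: "w \<notin> s" using \<open>w \<notin> \<Union>X0\<close> \<open>s \<in> X0\<close> by blast
  have eqY: "standard_sphere d V = starS X0 s w" using base by blast
  have c2: "card s \<ge> 2" using \<open>card s = d+1\<close> \<open>d \<ge> 1\<close> by simp
  have sne: "{} \<noteq> s" using c2 by auto
  have "{w} \<in> starS X0 s w" using memS[OF ws, of "{w}" X0] sne by blast
  then have "{w} \<subset> V" using eqY unfolding standard_sphere_def by blast
  then have "w \<in> V" by blast
  moreover have "s \<subseteq> V"
  proof
    fix x assume x: "x \<in> s"
    have "{x} \<noteq> s" using c2 by auto
    moreover have "{x} \<in> X0" using sc_closed[OF \<open>simplicial_complex X0\<close> \<open>s \<in> X0\<close>] x by blast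
    ultimately have "{x} \<in> starS X0 s w" using memS[OF ws, of "{x}" X0] by blast
    then show "x \<in> V" using eqY unfolding standard_sphere_def by blast
  qed
  ultimately have "s \<in> standard_sphere d V" unfolding standard_sphere_def using ws by blast
  moreover have "s \<notin> starS X0 s w" using memS[OF ws, of s X0] ws by blast
  ultimately show ?case using eqY by blast
next
  case (step Y' t u X0 s w)
  note IH = step.IH
  have ws: "w \<notin> s" using \<open>w \<notin> \<Union>X0\<close> \<open>s \<in> X0\<close> by blast
  have ut: "u \<notin> t" using \<open>u \<notin> \<Union>Y'\<close> \<open>t \<in> Y'\<close> by blast
  have wX: "\<And>\<alpha>. \<alpha> \<in> X0 \<Longrightarrow> w \<notin> \<alpha>" using \<open>w \<notin> \<Union>X0\<close> by blast
  have uY: "\<And>\<alpha>. \<alpha> \<in> Y' \<Longrightarrow> u \<notin> \<alpha>" using \<open>u \<notin> \<Union>Y'\<close> by blast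
  have scX: "simplicial_complex X0" by fact
  have scY: "simplicial_complex Y'" using \<open>pc d Y'\<close> unfolding pc_def by blast
  have cbY: "\<And>\<alpha>. \<alpha> \<in> Y' \<Longrightarrow> card \<alpha> \<le> d+1" using \<open>pc d Y'\<close> unfolding pc_def by blast
  have sX: "s \<in> X0" and tY: "t \<in> Y'" by fact+
  have fs: "finite s" using sc_finite[OF scX sX] .
  have ft: "finite t" using sc_finite[OF scY tY] .
  have cs: "card s = d+1" and ct: "card t = d+1" by fact+
  have d1: "d \<ge> 1" by fact
  have eqY: "starS Y' t u = starS X0 s w" by fact
  define Y where "Y = starS Y' t u"
  have m1: "\<alpha> \<in> Y \<longleftrightarrow> (\<alpha> \<in> X0 \<and> \<alpha> \<noteq> s) \<or> (w \<in> \<alpha> \<and> \<alpha> - {w} \<subset> s)" for \<alpha>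
    using memS[OF ws, of \<alpha> X0] eqY Y_def by simp
  have m2: "\<alpha> \<in> Y \<longleftrightarrow> (\<alpha> \<in> Y' \<and> \<alpha> \<noteq> t) \<or> (u \<in> \<alpha> \<and> \<alpha> - {u} \<subset> t)" for \<alpha>
    using memS[OF ut, of \<alpha> Y'] Y_def by simp
  have sY: "s \<notin> Y" using m1 ws by auto
  have tYY: "t \<notin> Y" using m2 ut by auto
  have single_s: "{x} \<subset> s" if "x \<in> s" for x using that cs d1 by (cases "s = {x}") auto
  have single_t: "{x} \<subset> t" if "x \<in> t" for x using that ct d1 by (cases "t = {x}") auto
  show ?case
  proof (cases "w = u")
    case True
    have "s \<subseteq> t"
    proof
      fix x assume x: "x \<in> s"
      have xw: "x \<noteq> w" using x ws by blast
      have "insert w {x} - {w} = {x}" using xw by blast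
      then have "insert w {x} - {w} \<subset> s" using single_s[OF x] by simp
      then have "insert w {x} \<in> Y" using m1[of "insert w {x}"] by blast
      moreover have "insert w {x} \<notin> Y'" using uY True by blast
      ultimately have "insert w {x} - {u} \<subset> t" using m2[of "insert w {x}"] by blast
      then show "x \<in> t" using xw True by blast
    qed
    moreover have "t \<subseteq> s"
    proof
      fix x assume x: "x \<in> t"
      have xw: "x \<noteq> u" using x ut by blast
      have "insert u {x} - {u} = {x}" using xw by blast
      then have "insert u {x} - {u} \<subset> t" using single_t[OF x] by simp
      then have "insert u {x} \<in> Y" using m2[of "insert u {x}"] by blast
      moreover have "insert u {x} \<notin> X0" using wX True by blast
      ultimately have "insert u {x} - {w} \<subset> s" using m1[of "insert u {x}"] by blast
      then show "x \<in> s" using xw True by blast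
    qed
    ultimately have st: "s = t" by (rule antisym)
    have "X0 = Y'"
    proof (rule set_eqI, rule iffI)
      fix \<alpha> assume a: "\<alpha> \<in> X0"
      show "\<alpha> \<in> Y'"
      proof (cases "\<alpha> = s")
        case True then show ?thesis using st tY by simp
      next
        case False
        then have "\<alpha> \<in> Y" using m1[of \<alpha>] a by blast
        moreover have "u \<notin> \<alpha>" using wX a True by blast
        ultimately show ?thesis using m2[of \<alpha>] by blast
      qed
    next
      fix \<alpha> assume a: "\<alpha> \<in> Y'"
      show "\<alpha> \<in> X0"
      proof (cases "\<alpha> = t")
        case True then show ?thesis using st sX by simp
      next
        case False
        then have "\<alpha> \<in> Y" using m2[of \<alpha>] a by blast
        moreover have "w \<notin> \<alpha>" using uY a True by blast
        ultimately show ?thesis using m1[of \<alpha>] by blast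
      qed
    qed
    then show ?thesis using \<open>stacked_sphere d Y'\<close> by simp
  next
    case wu: False
    have IH': "\<And>X s'. simplicial_complex X \<Longrightarrow> s' \<in> X \<Longrightarrow> card s' = d+1 \<Longrightarrow> w \<notin> \<Union>X \<Longrightarrow> Y' = starS X s' w \<Longrightarrow> stacked_sphere d X"
      by (rule IH[OF d1])
    show ?thesis
    proof (cases "s = t")
      case st: True
      have uW: "u \<notin> insert w s" using wu ut st by auto
      have "Y' = standard_sphere d (insert w s)"
      proof (rule sphere_sub[OF \<open>stacked_sphere d Y'\<close> d1])
        show "finite (insert w s)" using fs by auto
        show "card (insert w s) = d+2" using fs ws cs by auto
        fix A assume A: "A \<subset> insert w s"
        show "A \<in> Y'"
        proof (cases "w \<in> A")
          case True
          then have "A - {w} \<subset> s" using A ws by auto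
          then have "A \<in> Y" using m1 True by auto
          then show ?thesis using m2 uW A by auto
        next
          case False
          then have "A \<subseteq> t" using A st by auto
          then show ?thesis using sc_closed[OF scY tY] by auto
        qed
      qed
      then have mY': "\<alpha> \<in> Y' \<longleftrightarrow> \<alpha> \<subset> insert w s" for \<alpha> unfolding standard_sphere_def by auto
      have "X0 = standard_sphere d (insert u s)"
      proof (rule set_eqI)
        fix \<alpha>
        show "\<alpha> \<in> X0 \<longleftrightarrow> \<alpha> \<in> standard_sphere d (insert u s)"
        proof
          assume a: "\<alpha> \<in> X0"
          show "\<alpha> \<in> standard_sphere d (insert u s)"
          proof (cases "\<alpha> = s")
            case True then show ?thesis using uW unfolding standard_sphere_def by auto
          next
            case False
            then have "\<alpha> \<in> Y" "w \<notin> \<alpha>" using m1 a wX by auto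
            then consider "\<alpha> \<subset> insert w s" "\<alpha> \<noteq> t" | "u \<in> \<alpha>" "\<alpha> - {u} \<subset> t" using m2 mY' by auto
            then show ?thesis
            proof cases
              case 1 then show ?thesis using \<open>w \<notin> \<alpha>\<close> st uW unfolding standard_sphere_def by auto
            next
              case 2 then show ?thesis using st uW unfolding standard_sphere_def by auto
            qed
          qed
        next
          assume "\<alpha> \<in> standard_sphere d (insert u s)"
          then have a: "\<alpha> \<subset> insert u s" unfolding standard_sphere_def by auto
          show "\<alpha> \<in> X0"
          proof (cases "u \<in> \<alpha>")
            case True
            then have "\<alpha> - {u} \<subset> t" using a st uW by auto
            then have "\<alpha> \<in> Y" using m2 True by auto
            moreover have "w \<notin> \<alpha>" using a ws wu by auto
            ultimately show ?thesis using m1 by auto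
          next
            case False
            then have "\<alpha> \<subseteq> s" using a by auto
            then show ?thesis using sc_closed[OF scX sX] by auto
          qed
        qed
      qed
      then show ?thesis using stacked_sphere.base[of "insert u s" d] fs uW cs by auto
    next
      case snt: False
      have adj: "u \<in> s \<longleftrightarrow> w \<in> t"
      proof
        assume us: "u \<in> s"
        have "insert w {u} - {w} = {u}" using wu by blast
        then have "insert w {u} - {w} \<subset> s" using single_s[OF us] by simp
        then have "insert w {u} \<in> Y" using m1[of "insert w {u}"] by blast
        moreover have "insert w {u} \<notin> Y'" using uY by blast
        ultimately have "insert w {u} - {u} \<subset> t" using m2[of "insert w {u}"] by blast
        then show "w \<in> t" using wu by blast
      next
        assume wt: "w \<in> t"
        have "insert u {w} - {u} = {w}" using wu by blast
        then have "insert u {w} - {u} \<subset> t" using single_t[OF wt] by simp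
        then have "insert u {w} \<in> Y" using m2[of "insert u {w}"] by blast
        moreover have "insert u {w} \<notin> X0" using wX by blast
        ultimately have "insert u {w} - {w} \<subset> s" using m1[of "insert u {w}"] by blast
        then show "u \<in> s" using wu by blast
      qed
      show ?thesis
      proof (cases "u \<in> s")
        case us: True
        have wt: "w \<in> t" using adj us by blast
        have d1': "d = 1"
        proof (rule ccontr)
          assume "d \<noteq> 1"
          then have d2: "d \<ge> 2" using d1 by simp
          have sub: "s - {u} \<subseteq> t"
          proof
            fix y assume y: "y \<in> s - {u}"
            have "card {u, y} \<le> 2" by (cases "u = y") simp_all
            moreover have "s \<subseteq> {u, y} \<Longrightarrow> card s \<le> card {u, y}" using card_mono[of "{u,y}" s] by simp
            ultimately have "\<not> s \<subseteq> {u, y}" using cs d2 by linarith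
            then obtain z where z: "z \<in> s" "z \<noteq> u" "z \<noteq> y" by blast
            have "s - {z} \<subset> s" using z by blast
            moreover have "insert w (s - {z}) - {w} = s - {z}" using ws by blast
            ultimately have "insert w (s - {z}) \<in> Y" using m1[of "insert w (s - {z})"] by simp
            moreover have "insert w (s - {z}) \<notin> Y'" using uY us z by blast
            ultimately have "insert w (s - {z}) - {u} \<subset> t" using m2[of "insert w (s - {z})"] by blast
            then show "y \<in> t" using y z ws by blast
          qed
          have "card (s - {u}) = d" using card_Diff_singleton[OF us] cs by simp
          then have "s - {u} \<noteq> t" using ct by auto
          then have "s - {u} \<subset> t" using sub by blast
          then have "s \<in> Y" using m2[of s] us by blast
          then show False using sY by blast
        qed
        have "card (s - {u}) = 1" using card_Diff_singleton[OF us] cs d1' by simp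
        then obtain a where a: "s - {u} = {a}" using card_1_singleton_iff[of "s - {u}"] by auto
        have "card (t - {w}) = 1" using card_Diff_singleton[OF wt] ct d1' by simp
        then obtain b where b: "t - {w} = {b}" using card_1_singleton_iff[of "t - {w}"] by auto
        have sab: "s = {u, a}" using a us by blast
        have tab: "t = {w, b}" using b wt by blast
        have au: "a \<noteq> u" "a \<noteq> w" using a ws by blast+
        have bw: "b \<noteq> w" "b \<noteq> u" using b ut by blast+
        have ab: "a \<noteq> b"
        proof
          assume "a = b"
          then have "s - {u} = {b}" using a by simp
          moreover have "{b} \<subset> t" using tab bw by blast
          ultimately have "s - {u} \<subset> t" by simp
          then have "s \<in> Y" using m2[of s] us by blast
          then show False using sY by blast
        qed
        have a_X: "{a} \<in> X0" using sc_closed[OF scX sX] sab by blast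
        have "{a} \<noteq> s" using sab au by blast
        then have a_Y: "{a} \<in> Y" using m1[of "{a}"] a_X by blast
        have a_Y': "{a} \<in> Y'" using m2[of "{a}"] a_Y au by blast
        have b_Y': "{b} \<in> Y'" using sc_closed[OF scY tY] tab by blast
        have "{b} \<noteq> t" using tab bw by blast
        then have b_Y: "{b} \<in> Y" using m2[of "{b}"] b_Y' by blast
        have b_X: "{b} \<in> X0" using m1[of "{b}"] b_Y bw by blast
        have "{w, a} - {w} = {a}" using au(2) by auto
        moreover have "{a} \<subset> s" using sab au(1) by auto
        ultimately have "{w, a} - {w} \<subset> s" by simp
        then have wa_Y: "{w, a} \<in> Y" using m1[of "{w, a}"] by blast
        have wa_Y': "{w, a} \<in> Y'" using m2[of "{w, a}"] wa_Y au wu by blast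
        have "{u, b} - {u} = {b}" using bw(2) by auto
        moreover have "{b} \<subset> t" using tab bw(1) by auto
        ultimately have "{u, b} - {u} \<subset> t" by simp
        then have ub_Y: "{u, b} \<in> Y" using m2[of "{u, b}"] by blast
        have ub_X: "{u, b} \<in> X0" using m1[of "{u, b}"] ub_Y bw wu by blast
        have mt: "\<alpha> \<subset> {x, y} \<Longrightarrow> \<alpha> \<subseteq> {x} \<or> \<alpha> \<subseteq> {y}" for \<alpha> x y by auto
        show ?thesis
        proof (cases "{a, b} \<in> Y'")
          case abY: True
          have "Y' = standard_sphere d {w, a, b}"
          proof (rule sphere_sub[OF \<open>stacked_sphere d Y'\<close> d1])
            show "finite {w, a, b}" by auto
            show "card {w, a, b} = d+2" using d1' au bw ab by auto
            fix A assume A: "A \<subset> {w, a, b}"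
            then have "A \<subseteq> {w, a} \<or> A \<subseteq> {w, b} \<or> A \<subseteq> {a, b}" by auto
            then show "A \<in> Y'" using sc_closed[OF scY] wa_Y' tY tab abY by metis
          qed
          then have mY': "\<alpha> \<in> Y' \<longleftrightarrow> \<alpha> \<subset> {w, a, b}" for \<alpha> unfolding standard_sphere_def by auto
          have "X0 = standard_sphere d {u, a, b}"
          proof (rule set_eqI)
            fix \<alpha>
            show "\<alpha> \<in> X0 \<longleftrightarrow> \<alpha> \<in> standard_sphere d {u, a, b}"
            proof
              assume a1: "\<alpha> \<in> X0"
              show "\<alpha> \<in> standard_sphere d {u, a, b}"
              proof (cases "\<alpha> = s")
                case True then show ?thesis using sab ab bw unfolding standard_sphere_def by auto
              next
                case False
                then have "\<alpha> \<in> Y" "w \<notin> \<alpha>" using m1 a1 wX by auto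
                then consider "\<alpha> \<subset> {w, a, b}" | "u \<in> \<alpha>" "\<alpha> - {u} \<subset> t" using m2 mY' by auto
                then show ?thesis
                proof cases
                  case 1 then show ?thesis using \<open>w \<notin> \<alpha>\<close> au bw ab unfolding standard_sphere_def by auto
                next
                  case 2 then show ?thesis using \<open>w \<notin> \<alpha>\<close> tab au bw ab unfolding standard_sphere_def by auto
                qed
              qed
            next
              assume "\<alpha> \<in> standard_sphere d {u, a, b}"
              then have a1: "\<alpha> \<subset> {u, a, b}" unfolding standard_sphere_def by auto
              show "\<alpha> \<in> X0"
              proof (cases "u \<in> \<alpha>")
                case False
                then have "\<alpha> \<subseteq> {a, b}" using a1 by auto
                then have "\<alpha> \<in> Y'" "w \<notin> \<alpha>" using sc_closed[OF scY] abY au bw by auto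
                then have "\<alpha> \<in> Y" using m2 wt by auto
                then show ?thesis using m1 \<open>w \<notin> \<alpha>\<close> by auto
              next
                case True
                then have "\<alpha> \<subseteq> {u, a} \<or> \<alpha> \<subseteq> {u, b}" using a1 by auto
                then show ?thesis using sc_closed[OF scX] sX sab ub_X by metis
              qed
            qed
          qed
          then show ?thesis using stacked_sphere.base[of "{u, a, b}" d] d1' au bw ab by auto
        next
          case abY: False
          define \<rho> where "\<rho> = {a, b}"
          define X' where "X' = {\<alpha>\<in>Y'. w \<notin> \<alpha>} \<union> Pow \<rho>"
          have fr: "finite \<rho>" "card \<rho> = d+1" using ab d1' \<rho>_def by auto
          have wr: "w \<notin> \<rho>" and ur: "u \<notin> \<rho>" using au bw \<rho>_def by auto
          have xs: "simplicial_complex X' \<and> (\<forall>\<alpha>\<in>X'. card \<alpha> \<le> d+1)" using Xp_sc[OF \<open>pc d Y'\<close> fr] X'_def by auto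
          have mX': "\<alpha> \<in> X' \<longleftrightarrow> (\<alpha> \<in> Y' \<and> w \<notin> \<alpha>) \<or> \<alpha> \<subseteq> \<rho>" for \<alpha> using X'_def by auto
          have rY': "\<rho> \<notin> Y'" using abY \<rho>_def by auto
          show ?thesis
          proof -
            have g1: "\<rho> \<in> X'" using mX' by auto
            have g2: "card \<rho> = d+1" by fact
            have g3: "w \<notin> \<Union>X'" using mX' wr by auto
            have g4: "\<rho> \<in> X'" using mX' by auto
            have g5: "card \<rho> = d+1" by fact
            have g6: "u \<notin> \<Union>X'" using mX' uY ur by auto
            have g7: "Y' = starS X' \<rho> w"
            proof (rule set_eqI)
              fix \<alpha>
              have e: "\<alpha> \<in> starS X' \<rho> w \<longleftrightarrow> (\<alpha> \<in> X' \<and> \<alpha> \<noteq> \<rho>) \<or> (w \<in> \<alpha> \<and> \<alpha> - {w} \<subset> \<rho>)" using memS[OF wr] .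
              show "\<alpha> \<in> Y' \<longleftrightarrow> \<alpha> \<in> starS X' \<rho> w"
              proof
                assume a1: "\<alpha> \<in> Y'"
                show "\<alpha> \<in> starS X' \<rho> w"
                proof (cases "w \<in> \<alpha>")
                  case False then show ?thesis using e mX' a1 rY' by auto
                next
                  case True
                  show ?thesis
                  proof (cases "\<alpha> = t")
                    case True then show ?thesis using e tab \<rho>_def ab bw by auto
                  next
                    case False
                    then have "\<alpha> \<in> Y" using m2 a1 by auto
                    then have "\<alpha> - {w} \<subset> s" using m1 True wX by auto
                    moreover have "u \<notin> \<alpha>" using uY a1 by auto
                    ultimately have "\<alpha> - {w} \<subseteq> {a}" using sab by auto
                    then have "\<alpha> - {w} \<subset> \<rho>" using \<rho>_def ab by auto
                    then show ?thesis using e True by auto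
                  qed
                qed
              next
                assume a1: "\<alpha> \<in> starS X' \<rho> w"
                then consider "\<alpha> \<in> Y'" | "\<alpha> \<subset> \<rho>" | "w \<in> \<alpha>" "\<alpha> - {w} \<subset> \<rho>"
                  using e mX' by blast
                then show "\<alpha> \<in> Y'"
                proof cases
                  case 1 then show ?thesis .
                next
                  case 2
                  then have "\<alpha> \<subseteq> {a} \<or> \<alpha> \<subseteq> {b}" using mt \<rho>_def by auto
                  then show ?thesis using sc_closed[OF scY] a_Y' b_Y' by metis
                next
                  case 3
                  then have "\<alpha> - {w} \<subseteq> {a} \<or> \<alpha> - {w} \<subseteq> {b}" using mt \<rho>_def by auto
                  then have "\<alpha> \<subseteq> {w, a} \<or> \<alpha> \<subseteq> t" using tab by auto
                  then show ?thesis using sc_closed[OF scY] wa_Y' tY by metis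
                qed
              qed
            qed
            have g8: "X0 = starS X' \<rho> u"
            proof (rule set_eqI)
              fix \<alpha>
              have e: "\<alpha> \<in> starS X' \<rho> u \<longleftrightarrow> (\<alpha> \<in> X' \<and> \<alpha> \<noteq> \<rho>) \<or> (u \<in> \<alpha> \<and> \<alpha> - {u} \<subset> \<rho>)" using memS[OF ur] .
              show "\<alpha> \<in> X0 \<longleftrightarrow> \<alpha> \<in> starS X' \<rho> u"
              proof
                assume a1: "\<alpha> \<in> X0"
                show "\<alpha> \<in> starS X' \<rho> u"
                proof (cases "\<alpha> = s")
                  case True then show ?thesis using e sab \<rho>_def ab au by auto
                next
                  case False
                  then have aY: "\<alpha> \<in> Y" and wa: "w \<notin> \<alpha>" using m1 a1 wX by auto
                  show ?thesis
                  proof (cases "u \<in> \<alpha>")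
                    case True
                    then have "\<alpha> - {u} \<subset> t" using m2 aY uY by auto
                    then have "\<alpha> - {u} \<subseteq> {b}" using tab wa by auto
                    then have "\<alpha> - {u} \<subset> \<rho>" using \<rho>_def ab by auto
                    then show ?thesis using e True by auto
                  next
                    case False
                    then have "\<alpha> \<in> Y'" using m2 aY by auto
                    then show ?thesis using e mX' wa rY' by auto
                  qed
                qed
              next
                assume a1: "\<alpha> \<in> starS X' \<rho> u"
                then consider "\<alpha> \<in> Y'" "w \<notin> \<alpha>" | "\<alpha> \<subset> \<rho>" | "u \<in> \<alpha>" "\<alpha> - {u} \<subset> \<rho>"
                  using e mX' by blast
                then show "\<alpha> \<in> X0"
                proof cases
                  case 1
                  then have "\<alpha> \<noteq> t" using wt by auto
                  then have "\<alpha> \<in> Y" using m2 1 by auto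
                  then show ?thesis using m1 1 by auto
                next
                  case 2
                  then have "\<alpha> \<subseteq> {a} \<or> \<alpha> \<subseteq> {b}" using mt \<rho>_def by auto
                  then show ?thesis using sc_closed[OF scX] a_X b_X by metis
                next
                  case 3
                  then have "\<alpha> - {u} \<subseteq> {a} \<or> \<alpha> - {u} \<subseteq> {b}" using mt \<rho>_def by auto
                  then have "\<alpha> \<subseteq> s \<or> \<alpha> \<subseteq> {u, b}" using sab by auto
                  then show ?thesis using sc_closed[OF scX] sX ub_X by metis
                qed
              qed
            qed
            have stX': "stacked_sphere d X'" using IH'[OF conjunct1[OF xs] g1 g2 g3 g7] .
            show ?thesis using assemble2[OF stX' conjunct1[OF xs] conjunct2[OF xs] g4 g5 g6 g8] .
          qed
        qed
      next
        case us: False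
        then have wt: "w \<notin> t" using adj by auto
        define X' where "X' = {\<alpha>\<in>Y'. w \<notin> \<alpha>} \<union> Pow s"
        have xs: "simplicial_complex X' \<and> (\<forall>\<alpha>\<in>X'. card \<alpha> \<le> d+1)" using Xp_sc[OF \<open>pc d Y'\<close> fs cs] X'_def by auto
        have sY': "s \<notin> Y'" using m2 sY snt by auto
        have mX': "\<alpha> \<in> X' \<longleftrightarrow> (\<alpha> \<in> Y' \<and> w \<notin> \<alpha>) \<or> \<alpha> \<subseteq> s" for \<alpha> using X'_def by auto
        show ?thesis
        proof -
          have g1: "s \<in> X'" using mX' by auto
          have g2: "card s = d+1" by fact
          have g3: "w \<notin> \<Union>X'" using mX' ws by auto
          have g4: "t \<in> X'" using mX' tY wt by auto
          have g5: "card t = d+1" by fact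
          have g6: "u \<notin> \<Union>X'" using mX' uY us by auto
          have g7: "Y' = starS X' s w"
          proof (rule set_eqI)
            fix \<alpha>
            have e: "\<alpha> \<in> starS X' s w \<longleftrightarrow> (\<alpha> \<in> X' \<and> \<alpha> \<noteq> s) \<or> (w \<in> \<alpha> \<and> \<alpha> - {w} \<subset> s)" using memS[OF ws] .
            show "\<alpha> \<in> Y' \<longleftrightarrow> \<alpha> \<in> starS X' s w"
            proof
              assume a: "\<alpha> \<in> Y'"
              show "\<alpha> \<in> starS X' s w"
              proof (cases "w \<in> \<alpha>")
                case False then show ?thesis using e mX' a sY' by auto
              next
                case True
                then have "\<alpha> \<noteq> t" using wt by auto
                then have "\<alpha> \<in> Y" using m2 a by auto
                then show ?thesis using m1 e True wX by auto
              qed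
            next
              assume a: "\<alpha> \<in> starS X' s w"
              show "\<alpha> \<in> Y'"
              proof (cases "w \<in> \<alpha>")
                case False
                then have "\<alpha> \<in> Y' \<or> \<alpha> \<subset> s" using a e mX' by auto
                moreover have "\<alpha> \<in> Y'" if "\<alpha> \<subset> s"
                proof -
                  have "\<alpha> \<in> Y" using m1 that sc_closed[OF scX sX] by auto
                  moreover have "u \<notin> \<alpha>" using that us by auto
                  ultimately show ?thesis using m2 by auto
                qed
                ultimately show ?thesis by auto
              next
                case True
                then have "\<alpha> - {w} \<subset> s" using a e mX' by auto
                then have "\<alpha> \<in> Y" "u \<notin> \<alpha>" using m1 True us wu by auto
                then show ?thesis using m2 by auto
              qed
            qed
          qed
          have g8: "X0 = starS X' t u"
          proof (rule set_eqI)
            fix \<alpha>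
            have e: "\<alpha> \<in> starS X' t u \<longleftrightarrow> (\<alpha> \<in> X' \<and> \<alpha> \<noteq> t) \<or> (u \<in> \<alpha> \<and> \<alpha> - {u} \<subset> t)" using memS[OF ut] .
            show "\<alpha> \<in> X0 \<longleftrightarrow> \<alpha> \<in> starS X' t u"
            proof
              assume a: "\<alpha> \<in> X0"
              show "\<alpha> \<in> starS X' t u"
              proof (cases "\<alpha> = s")
                case True then show ?thesis using e mX' snt by auto
              next
                case False
                then have "\<alpha> \<in> Y" "w \<notin> \<alpha>" using m1 a wX by auto
                then show ?thesis using m2 e mX' uY by blast
              qed
            next
              assume a: "\<alpha> \<in> starS X' t u"
              then consider "\<alpha> \<in> Y'" "w \<notin> \<alpha>" "\<alpha> \<noteq> t" | "\<alpha> \<subseteq> s" | "u \<in> \<alpha>" "\<alpha> - {u} \<subset> t"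
                using e mX' by blast
              then show "\<alpha> \<in> X0"
              proof cases
                case 1 then show ?thesis using m1 m2 by blast
              next
                case 2 then show ?thesis using sc_closed[OF scX sX] by auto
              next
                case 3
                then have "\<alpha> \<in> Y" "w \<notin> \<alpha>" using m2 wt wu by auto
                then show ?thesis using m1 by auto
              qed
            qed
          qed
          have stX': "stacked_sphere d X'" using IH'[OF conjunct1[OF xs] g1 g2 g3 g7] .
          show ?thesis using assemble2[OF stX' conjunct1[OF xs] conjunct2[OF xs] g4 g5 g6 g8] .
        qed
      qed
    qed
  qed
qed


theorem lemma4p6:
  fixes X Y :: "'a set set" and \<sigma> :: "'a set" and v :: 'a and d :: nat
  assumes "normal_pseudomanifold d X"
    and "normal_pseudomanifold d Y"
    and "\<sigma> \<in> facets X"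
    and "v \<notin> vertices X"
    and "Y = star_in d X \<sigma> v"
  shows "stacked_sphere d Y \<longleftrightarrow> stacked_sphere d X"
proof -
  have d1: "d \<ge> 1" and pd: "pure_dim d X" using assms(1) unfolding normal_pseudomanifold_def by auto
  have sc: "simplicial_complex X" using pd unfolding pure_dim_def by auto
  have cs: "card \<sigma> = d + 1" using pd assms(3) unfolding pure_dim_def by auto
  have sX: "\<sigma> \<in> X" using assms(3) unfolding facets_def by auto
  have eq: "Y = starS X \<sigma> v" using char[OF sc assms(3)] cs assms(4,5) by auto
  show ?thesis
  proof
    assume "stacked_sphere d Y"
    then show "stacked_sphere d X" using main[OF _ d1 sc sX cs _ eq] assms(4) unfolding vertices_def by auto
  next
    assume "stacked_sphere d X"
    then show "stacked_sphere d Y" using stacked_sphere.step[OF _ assms(3,4)] assms(5) by auto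
  qed
qed

end
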